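(* Let $p$ be an odd prime and take $k=1$. For every $s\ge3$ and $0\le t\le p-1$, the $p$-Fibonacci number of the vertex $V_{s,t}=\lambda\big(p(2sp-(2s+1)),\,p(sp-(s+1))+t\big)$ is $$\mathcal M_{V_{s,t}}=\begin{cases}\dfrac{p^{s-3}(p-1)}{2}\Big(2(s-1)p^2+2t-(2s-5)\Big), & 0\le t<\frac{p-1}{2},\\[6pt] \dfrac{p^{s-3}(p-1)}{2}\Big(2(s-1)p^2+2t-2p-(2s-5)\Big), & \frac{p-1}{2}\le t\le p-1.\end{cases}$$
   Context: Fix an odd prime $p$ and an integer $k\ge 0$. For integers $0\le i<n$ write $\lambda(n,i)=(n-i,1^i)$ for the hook partition of $n$ with $n-i$ boxes in its first row and $i$ further boxes in its first column. If $\mu=\lambda(n',i')$ is obtained from $\lambda(n,i)$ by appending $m=(n'-i')-(n-i)\ge 0$ boxes to the first row and $n''=i'-i\ge 0$ boxes to the first column, we say $\mu$ is obtained by adding the block $B_{m,n''}$ ($m$ horizontal nodes, $n''$ vertical nodes). Put $x_s=p^k(sp-(s+1))$. The relevant part ("column $k$") of the $p$-Bratteli diagram is the graded directed graph with vertices: on floor $2k+1$, $S_i=\lambda(p^k(p-1),i)$ for $0\le i<p^k(p-1)$; on floor $2(k+s)$ ($s\ge1$), $V_{s,l}=\lambda\big(p^k(2sp-(2s+1)),\,x_s+l\big)$ for $0\le l<p^k$; on floor $2(k+s)-1$ ($s\ge2$), $W_{s,l'}=\lambda\big(p^k((2s-1)p-2s),\,x_{s-1}+l'\big)$ for $0\le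 l'<p^{k+1}$; and edges, each labelled by the block added: (E1) $S_i\to V_{1,l}$ exactly when $i=p^kt+l$ with $0\le t\le p-2$, block $B_{p^kt,\,p^k(p-2-t)}$; (E2) for $s\ge2$, $0\le l<p^k$, $0\le\beta\le p-1$: $V_{s-1,l}\to W_{s,pl+\beta}$, block $B_{p^k(p-1)-((p-1)l+\beta),\,(p-1)l+\beta}$; (E3) for $s\ge 2$, $0\le l'<p^{k+1}$ and $t=\lfloor l'/p^k\rfloor$: $W_{s,l'}\to V_{s,l'-p^kt}$, block $B_{p^kt,\,p^k(p-1-t)}$. A path ending at a vertex $v$ is a sequence of edges starting at some $S_i$ and going up one floor at a time to $v$ ($S_i\to V_{1,\cdot}\to W_{2,\cdot}\to V_{2,\cdot}\to W_{3,\cdot}\to\cdots\to v$); $\mathcal P(v)$ is the set of all paths ending at $v$. The blocks of a path are numbered $B^2,B^3,\dots,B^N$: $B^2$ is the block of the edge leaving $S_i$, and for $j\ge2$, $B^{2j-1}$ is the block of the edge into $W_{j,\cdot}$ and $B^{2j}$ the block of the edge into $V_{j,\cdot}$. Write $B^j=B_{m_j,n_j}$. Descents: $1\in\mathrm{Des}(P)$ iff $m_2=p^kt$ with $0\le t<\frac{p-1}{2}$; $2\notin\mathrm{Des}(P)$; for $3\le j<N$, $j\in\mathrm{Des}(P)$ iff $m_j>m_{j+1}$ and $n_j<n_{j+1}$. $\mathrm{des}(P)=|\mathrm{Des}(P)|$. The $p^k$-Fibonacci number of a vertex $v$ is $\mathcal M_v=\sum_{P\in\mathcal P(v)}\mathrm{des}(P)$.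 *)

theory Defs
  imports Complex_Main "HOL-Computational_Algebra.Primes"
begin

text \<open>Vertices of column k of the p-Bratteli diagram, by their labels:
  S i = S_i (floor 2k+1), V s l = V_{s,l} (floor 2(k+s)), W s l' = W_{s,l'} (floor 2(k+s)-1).
  A block B_{m,n} is represented by the pair (m, n).\<close>
datatype vertex = S nat | V nat nat | W nat nat

type_synonym block = "nat \<times> nat"

fun edge :: "nat \<Rightarrow> nat \<Rightarrow> vertex \<Rightarrow> vertex \<Rightarrow> block \<Rightarrow> bool" where
  "edge p k (S i) (V s l) b \<longleftrightarrow>
     s = 1 \<and> i < p^k * (p - 1) \<and> l < p^k \<and>
     (\<exists>t. t \<le> p - 2 \<and> i = p^k * t + l \<and> b = (p^k * t, p^k * (p - 2 - t)))"
| "edge p k (V s l) (W s' l') b \<longleftrightarrow>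
     s' = s + 1 \<and> s \<ge> 1 \<and> l < p^k \<and>
     (\<exists>\<beta>. \<beta> \<le> p - 1 \<and> l' = p * l + \<beta> \<and>
        b = (p^k * (p - 1) - ((p - 1) * l + \<beta>), (p - 1) * l + \<beta>))"
| "edge p k (W s l') (V s' l) b \<longleftrightarrow>
     s' = s \<and> s \<ge> 2 \<and> l' < p^(k+1) \<and>
     (let t = l' div p^k in l = l' - p^k * t \<and> b = (p^k * t, p^k * (p - 1 - t)))"
| "edge p k _ _ _ \<longleftrightarrow> False"

definition is_S :: "vertex \<Rightarrow> bool" where
  "is_S v \<longleftrightarrow> (\<exists>i. v = S i)"

text \<open>A path is a list of vertices vs (starting at some S_i) together with the list bs of
  blocks of its consecutive edges; bs ! 0 = B^2, bs ! 1 = B^3, ..., i.e. B^j = bs ! (j - 2),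
  and N = length bs + 1.\<close>
definition is_path :: "nat \<Rightarrow> nat \<Rightarrow> vertex list \<Rightarrow> block list \<Rightarrow> bool" where
  "is_path p k vs bs \<longleftrightarrow> vs \<noteq> [] \<and> is_S (hd vs) \<and> length bs + 1 = length vs \<and>
     (\<forall>j < length bs. edge p k (vs ! j) (vs ! (j + 1)) (bs ! j))"

definition paths :: "nat \<Rightarrow> nat \<Rightarrow> vertex \<Rightarrow> (vertex list \<times> block list) set" where
  "paths p k v = {(vs, bs). is_path p k vs bs \<and> last vs = v}"

definition Des :: "nat \<Rightarrow> nat \<Rightarrow> block list \<Rightarrow> nat set" where
  "Des p k bs = {j. (j = 1 \<and> (\<exists>t. fst (bs ! 0) = p^k * t \<and> real t < (real p - 1) / 2))
      \<or> (3 \<le> j \<and> j < length bs + 1 \<and>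
         fst (bs ! (j - 2)) > fst (bs ! (j - 1)) \<and> snd (bs ! (j - 2)) < snd (bs ! (j - 1)))}"

definition des :: "nat \<Rightarrow> nat \<Rightarrow> block list \<Rightarrow> nat" where
  "des p k bs = card (Des p k bs)"

definition fibM :: "nat \<Rightarrow> nat \<Rightarrow> vertex \<Rightarrow> nat" where
  "fibM p k v = (\<Sum>P \<in> paths p k v. des p k (snd P))"

end

theory Submission
  imports Defs
begin


definition B1 :: "nat \<Rightarrow> nat \<Rightarrow> nat \<Rightarrow> block" where
  "B1 p b c = (p*(p-1) - ((p-1)*b + c), (p-1)*b + c)"
definition B2 :: "nat \<Rightarrow> nat \<Rightarrow> block" where
  "B2 p b = (p*b, p*(p-1-b))"
definition dsc :: "block \<Rightarrow> block \<Rightarrow> bool" where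
  "dsc x y \<longleftrightarrow> fst y < fst x \<and> snd x < snd y"
definition extp :: "nat \<Rightarrow> nat \<Rightarrow> nat \<Rightarrow> nat \<Rightarrow> vertex list \<times> block list \<Rightarrow> vertex list \<times> block list" where
  "extp p s b c P = (fst P @ [W (Suc s) (p*b+c), V (Suc s) c], snd P @ [B1 p b c, B2 p b])"

lemma is_path_single: "is_path p k [v] bs \<longleftrightarrow> is_S v \<and> bs = []"
  by (auto simp: is_path_def)

lemma is_path_snoc:
  assumes "vs \<noteq> []"
  shows "is_path p k (vs @ [v]) (bs @ [b]) \<longleftrightarrow> is_path p k vs bs \<and> edge p k (last vs) v b"
proof
  assume H: "is_path p k (vs @ [v]) (bs @ [b])"
  then have L: "length bs + 1 = length vs" by (simp add: is_path_def)
  have E: "\<And>j. j < length bs + 1 \<Longrightarrow> edge p k ((vs@[v]) ! j) ((vs@[v]) ! (j + 1)) ((bs@[b]) ! j)"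
    using H by (simp add: is_path_def)
  have "\<forall>j<length bs. edge p k (vs ! j) (vs ! (j + 1)) (bs ! j)"
  proof (intro allI impI)
    fix j assume "j < length bs"
    with E[of j] L show "edge p k (vs ! j) (vs ! (j + 1)) (bs ! j)" by (simp add: nth_append)
  qed
  moreover have "last vs = vs ! length bs" by (metis L add_diff_cancel_right' assms last_conv_nth)
  moreover have "edge p k (last vs) v b" using E[of "length bs"] L assms calculation(2)
    by (simp add: nth_append)
  ultimately show "is_path p k vs bs \<and> edge p k (last vs) v b"
    using H assms L by (simp add: is_path_def)
next
  assume H: "is_path p k vs bs \<and> edge p k (last vs) v b"
  then have L: "length bs + 1 = length vs" by (simp add: is_path_def)
  have "\<forall>j<length (bs@[b]). edge p k ((vs@[v]) ! j) ((vs@[v]) ! (j + 1)) ((bs@[b]) ! j)"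
  proof (intro allI impI)
    fix j assume j: "j < length (bs@[b])"
    show "edge p k ((vs@[v]) ! j) ((vs@[v]) ! (j + 1)) ((bs@[b]) ! j)"
    proof (cases "j < length bs")
      case True then show ?thesis using H L by (simp add: nth_append is_path_def)
    next
      case False then have "j = length bs" using j by simp
      moreover have "last vs = vs ! length bs" by (metis L add_diff_cancel_right' assms last_conv_nth)
      ultimately show ?thesis using H L assms by (simp add: nth_append)
    qed
  qed
  then show "is_path p k (vs @ [v]) (bs @ [b])" using H assms L by (simp add: is_path_def)
qed

lemma path_snoc_split:
  assumes "is_path p k vs' bs'" "length vs' \<ge> 2"
  obtains vs v bs b where "vs' = vs @ [v]" "bs' = bs @ [b]" "vs \<noteq> []"
    "is_path p k vs bs" "edge p k (last vs) v b"
proof -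
  obtain vs v where 1: "vs' = vs @ [v]" using assms by (metis rev_exhaust list.size(3) not_numeral_le_zero)
  have "bs' \<noteq> []" using assms by (auto simp: is_path_def)
  then obtain bs b where 2: "bs' = bs @ [b]" by (metis rev_exhaust)
  have 3: "vs \<noteq> []" using 1 assms by auto
  show ?thesis using that[OF 1 2 3] is_path_snoc[OF 3] assms 1 2 by auto
qed

lemma path_len2:
  assumes "is_path p k vs bs" "\<not> is_S (last vs)"
  shows "length vs \<ge> 2"
proof (rule ccontr)
  assume "\<not> length vs \<ge> 2"
  moreover have "vs \<noteq> []" using assms by (simp add: is_path_def)
  ultimately obtain v where "vs = [v]" by (metis One_nat_def Suc_1 le_neq_implies_less length_0_conv less_Suc0 nat_less_le not_less_eq_eq length_Suc_conv)
  then show False using assms by (simp add: is_path_def)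
qed

lemma app2_eq: "xs @ [a,b] = ys @ [c,d] \<longleftrightarrow> xs = ys \<and> a = c \<and> b = d"
  by (metis append1_eq_conv append_Cons append_Nil append_assoc)



lemma paths_Suc:
  assumes s: "s \<ge> 1" and c: "c < p"
  shows "paths p 1 (V (Suc s) c) = (\<Union>b\<in>{..<p}. extp p s b c ` paths p 1 (V s b))"
proof (intro equalityI subsetI)
  fix P assume P: "P \<in> paths p 1 (V (Suc s) c)"
  obtain vs' bs' where Pe: "P = (vs', bs')" by (cases P)
  have ip: "is_path p 1 vs' bs'" and lv: "last vs' = V (Suc s) c" using P Pe by (auto simp: paths_def)
  have "length vs' \<ge> 2" using path_len2[OF ip] lv by (simp add: is_S_def)
  then obtain vs v bs b where 1: "vs' = vs @ [v]" "bs' = bs @ [b]" "vs \<noteq> []"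
    "is_path p 1 vs bs" "edge p 1 (last vs) v b" using path_snoc_split[OF ip] by metis
  have v: "v = V (Suc s) c" using 1 lv by simp
  obtain l' where lw: "last vs = W (Suc s) l'" and l'p: "l' < p^2"
    and b: "b = (p * (l' div p), p * (p - 1 - l' div p))" and cl: "c = l' - p * (l' div p)"
    using 1(5) v s by (cases "last vs") (auto simp: Let_def power2_eq_square)
  have "length vs \<ge> 2" using path_len2[OF 1(4)] lw by (simp add: is_S_def)
  then obtain vs0 v0 bs0 b0 where 2: "vs = vs0 @ [v0]" "bs = bs0 @ [b0]" "vs0 \<noteq> []"
    "is_path p 1 vs0 bs0" "edge p 1 (last vs0) v0 b0" using path_snoc_split[OF 1(4)] by metis
  have v0: "v0 = W (Suc s) l'" using 2 lw by simp
  obtain l \<beta> where lv0: "last vs0 = V s l" and lp: "l < p" and bp: "\<beta> \<le> p - 1"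
    and l'e: "l' = p * l + \<beta>" and b0: "b0 = (p * (p - 1) - ((p - 1) * l + \<beta>), (p - 1) * l + \<beta>)"
    using 2(5) v0 by (cases "last vs0") auto
  have pp: "p > 0" using c by simp
  have bl: "\<beta> < p" using bp pp by simp
  have dv: "l' div p = l" using l'e bl pp by simp
  have cb: "c = \<beta>" using cl dv l'e by simp
  have Q: "(vs0, bs0) \<in> paths p 1 (V s l)" using 2 lv0 by (simp add: paths_def)
  have "P = extp p s l c (vs0, bs0)"
    using Pe 1 2 v v0 b b0 dv cb l'e by (simp add: extp_def B1_def B2_def)
  then show "P \<in> (\<Union>b\<in>{..<p}. extp p s b c ` paths p 1 (V s b))" using Q lp by blast
next
  fix P assume "P \<in> (\<Union>b\<in>{..<p}. extp p s b c ` paths p 1 (V s b))"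
  then obtain b Q where bp: "b < p" and Q: "Q \<in> paths p 1 (V s b)" and PQ: "P = extp p s b c Q" by blast
  obtain vs bs where Qe: "Q = (vs, bs)" by (cases Q)
  have ip: "is_path p 1 vs bs" and lv: "last vs = V s b" using Q Qe by (auto simp: paths_def)
  have ne: "vs \<noteq> []" using ip by (simp add: is_path_def)
  have e1: "edge p 1 (V s b) (W (Suc s) (p*b+c)) (B1 p b c)" using s bp c by (auto simp: B1_def)
  have "p*b + c < p*b + p" using c by simp
  also have "\<dots> = p * (b+1)" by simp
  also have "\<dots> \<le> p * p" using bp by (intro mult_le_mono2) simp
  finally have lt: "p*b + c < p^2" by (simp add: power2_eq_square)
  have dv: "(p*b+c) div p = b" using c by simp
  have e2: "edge p 1 (W (Suc s) (p*b+c)) (V (Suc s) c) (B2 p b)" using s lt dv by (simp add: B2_def Let_def power2_eq_square)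
  have "is_path p 1 (vs @ [W (Suc s) (p*b+c)]) (bs @ [B1 p b c])"
    using is_path_snoc[OF ne] ip lv e1 by simp
  then have "is_path p 1 ((vs @ [W (Suc s) (p*b+c)]) @ [V (Suc s) c]) ((bs @ [B1 p b c]) @ [B2 p b])"
    using is_path_snoc[of "vs @ [W (Suc s) (p*b+c)]" p 1 "V (Suc s) c" "bs @ [B1 p b c]" "B2 p b"] e2 by (simp del: edge.simps)
  then show "P \<in> paths p 1 (V (Suc s) c)" using PQ Qe by (simp add: paths_def extp_def)
qed

lemma paths_one:
  assumes b: "b < p" and p2: "p \<ge> 2"
  shows "paths p 1 (V 1 b) = (\<lambda>t. ([S (p*t+b), V 1 b], [(p*t, p*(p-2-t))])) ` {..p-2}"
proof (intro equalityI subsetI)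
  fix P assume P: "P \<in> paths p 1 (V 1 b)"
  obtain vs' bs' where Pe: "P = (vs', bs')" by (cases P)
  have ip: "is_path p 1 vs' bs'" and lv: "last vs' = V 1 b" using P Pe by (auto simp: paths_def)
  have "length vs' \<ge> 2" using path_len2[OF ip] lv by (simp add: is_S_def)
  then obtain vs v bs b0 where 1: "vs' = vs @ [v]" "bs' = bs @ [b0]" "vs \<noteq> []"
    "is_path p 1 vs bs" "edge p 1 (last vs) v b0" using path_snoc_split[OF ip] by metis
  have v: "v = V 1 b" using 1 lv by simp
  obtain i where li: "last vs = S i" using 1(5) v by (cases "last vs") auto
  obtain t where t: "t \<le> p - 2" "i = p*t + b" "b0 = (p*t, p*(p-2-t))"
    using 1(5) v li by auto
  have "\<not> length vs \<ge> 2"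
  proof
    assume "length vs \<ge> 2"
    then obtain vs0 v0 bs0 b1 where 2: "vs = vs0 @ [v0]" "edge p 1 (last vs0) v0 b1"
      using path_snoc_split[OF 1(4)] by metis
    then show False using li by (cases "last vs0") auto
  qed
  then obtain u where "vs = [u]" using 1(3) by (cases vs) (auto simp: Suc_le_eq)
  then have "vs = [S i]" "bs = []" using li 1(4) by (auto simp: is_path_def)
  then have "P = ([S (p*t+b), V 1 b], [(p*t, p*(p-2-t))])" using Pe 1 v t by simp
  then show "P \<in> (\<lambda>t. ([S (p*t+b), V 1 b], [(p*t, p*(p-2-t))])) ` {..p-2}" using t by auto
next
  fix P assume "P \<in> (\<lambda>t. ([S (p*t+b), V 1 b], [(p*t, p*(p-2-t))])) ` {..p-2}"
  then obtain t where t: "t \<le> p - 2" and Pe: "P = ([S (p*t+b), V 1 b], [(p*t, p*(p-2-t))])" by auto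
  have "p*t + b < p*t + p" using b by simp
  also have "\<dots> = p * (t+1)" by simp
  also have "\<dots> \<le> p * (p - 1)" using t p2 by (intro mult_le_mono2) simp
  finally have lt: "p*t+b < p*(p-1)" .
  have e: "edge p 1 (S (p*t+b)) (V 1 b) (p*t, p*(p-2-t))" using lt b t by auto
  have "is_path p 1 [S (p*t+b)] []" by (simp add: is_path_single is_S_def)
  then have "is_path p 1 ([S (p*t+b)] @ [V 1 b]) ([] @ [(p*t, p*(p-2-t))])"
    using is_path_snoc[of "[S (p*t+b)]" p 1 "V 1 b" "[]" "(p*t, p*(p-2-t))"] e by (simp del: edge.simps)
  then show "P \<in> paths p 1 (V 1 b)" using Pe by (simp add: paths_def)
qed



lemma Des_sub: "bs \<noteq> [] \<Longrightarrow> Des p k bs \<subseteq> {..length bs}"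
  by (auto simp: Des_def Suc_le_eq)

lemma Des_snoc2:
  assumes ne: "bs \<noteq> []"
  shows "Des p k (bs @ [b1, b2]) = Des p k bs
     \<union> (if 2 \<le> length bs \<and> dsc (last bs) b1 then {length bs + 1} else {})
     \<union> (if dsc b1 b2 then {length bs + 2} else {})"
proof -
  have h0: "(bs @ [b1,b2]) ! 0 = bs ! 0" using ne by (simp add: nth_append)
  have lst: "last bs = bs ! (length bs - 1)" using ne by (simp add: last_conv_nth)
  show ?thesis
  proof (intro equalityI subsetI)
    fix j assume j: "j \<in> Des p k (bs @ [b1, b2])"
    show "j \<in> Des p k bs
     \<union> (if 2 \<le> length bs \<and> dsc (last bs) b1 then {length bs + 1} else {})
     \<union> (if dsc b1 b2 then {length bs + 2} else {})"
    proof (cases "j < length bs + 1")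
      case True
      have "length bs > 0" using ne by simp
      then have "j-1 < length bs" "j-2 < length bs" using True by linarith+
      then have i1: "(bs@[b1,b2]) ! (j-1) = bs ! (j-1)" and i2: "(bs@[b1,b2]) ! (j-2) = bs ! (j-2)"
        using ne by (auto simp: nth_append)
      show ?thesis using j h0 True by (simp only: Des_def i1 i2 mem_Collect_eq Un_iff length_append) auto
    next
      case False
      then have "j = length bs + 1 \<or> j = length bs + 2" using j by (auto simp: Des_def)
      then show ?thesis
      proof
        assume jj: "j = length bs + 1"
        then have "3 \<le> j" "fst ((bs @ [b1, b2]) ! (j - 2)) > fst ((bs @ [b1, b2]) ! (j - 1))"
           "snd ((bs @ [b1, b2]) ! (j - 2)) < snd ((bs @ [b1, b2]) ! (j - 1))"
          using j ne by (auto simp: Des_def)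
        then show ?thesis using jj lst ne by (auto simp: nth_append dsc_def)
      next
        assume jj: "j = length bs + 2"
        then have "3 \<le> j" "fst ((bs @ [b1, b2]) ! (j - 2)) > fst ((bs @ [b1, b2]) ! (j - 1))"
           "snd ((bs @ [b1, b2]) ! (j - 2)) < snd ((bs @ [b1, b2]) ! (j - 1))"
          using j ne by (auto simp: Des_def)
        then show ?thesis using jj ne by (auto simp: nth_append dsc_def)
      qed
    qed
  next
    fix j assume j: "j \<in> Des p k bs
     \<union> (if 2 \<le> length bs \<and> dsc (last bs) b1 then {length bs + 1} else {})
     \<union> (if dsc b1 b2 then {length bs + 2} else {})"
    then consider "j \<in> Des p k bs" | "j = length bs + 1" "2 \<le> length bs" "dsc (last bs) b1"
      | "j = length bs + 2" "dsc b1 b2"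
      by (auto split: if_splits)
    then show "j \<in> Des p k (bs @ [b1, b2])"
    proof cases
      case 1
      then have "j \<le> length bs" using Des_sub[OF ne] by auto
      moreover have "length bs > 0" using ne by simp
      ultimately have "j-1 < length bs" "j-2 < length bs" by linarith+
      then have i1: "(bs@[b1,b2]) ! (j-1) = bs ! (j-1)" and i2: "(bs@[b1,b2]) ! (j-2) = bs ! (j-2)"
        using ne by (auto simp: nth_append)
      show ?thesis using 1 h0 by (simp only: Des_def i1 i2 mem_Collect_eq length_append) auto
    next
      case 2
      then show ?thesis using lst by (auto simp: Des_def nth_append dsc_def)
    next
      case 3
      then show ?thesis using ne by (auto simp: Des_def nth_append dsc_def Suc_le_eq)
    qed
  qed
qed

lemma des_snoc2:
  assumes ne: "bs \<noteq> []"
  shows "des p k (bs @ [b1, b2]) = des p k bs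
     + (if 2 \<le> length bs \<and> dsc (last bs) b1 then 1 else 0)
     + (if dsc b1 b2 then 1 else 0)"
proof -
  have f: "finite (Des p k bs)" using Des_sub[OF ne] finite_subset by blast
  have d1: "Des p k bs \<inter> (if 2 \<le> length bs \<and> dsc (last bs) b1 then {length bs + 1} else {}) = {}"
    using Des_sub[OF ne, of p k] by auto
  have d2: "(Des p k bs \<union> (if 2 \<le> length bs \<and> dsc (last bs) b1 then {length bs + 1} else {}))
      \<inter> (if dsc b1 b2 then {length bs + 2} else {}) = {}"
    using Des_sub[OF ne, of p k] by auto
  show ?thesis unfolding des_def Des_snoc2[OF ne]
    by (subst card_Un_disjoint[OF _ _ d2], simp add: f, simp,
        subst card_Un_disjoint[OF f _ d1], simp, simp)
qed

lemma des_one: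
  assumes "p > 0"
  shows "des p 1 [(p*t, x)] = (if real t < (real p - 1)/2 then 1 else 0)"
proof -
  have "Des p 1 [(p*t, x)] = (if real t < (real p - 1)/2 then {1} else {})"
    using assms by (auto simp: Des_def)
  then show ?thesis by (simp add: des_def)
qed



lemma extp_inj:
  assumes "p > 0" "extp p s b c P = extp p s b' c Q"
  shows "b = b' \<and> P = Q"
proof -
  have "fst P = fst Q \<and> p*b+c = p*b'+c" using assms(2) by (simp add: extp_def app2_eq)
  moreover have "snd P = snd Q" using assms(2) by (simp add: extp_def app2_eq)
  ultimately show ?thesis using assms(1) by (simp add: prod_eq_iff)
qed

lemma paths_bs_ne: assumes "P \<in> paths p k (V s b)" shows "snd P \<noteq> []"
proof -
  obtain vs bs where P: "P = (vs, bs)" by (cases P)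
  have ip: "is_path p k vs bs" "last vs = V s b" using assms P by (auto simp: paths_def)
  have "length vs \<ge> 2" using path_len2[OF ip(1)] ip(2) by (simp add: is_S_def)
  then show ?thesis using ip P by (auto simp: is_path_def)
qed

lemma finite_paths: "p \<ge> 2 \<Longrightarrow> b < p \<Longrightarrow> finite (paths p 1 (V (Suc r) b))"
proof (induction r arbitrary: b)
  case 0
  then show ?case using paths_one[of b p] by simp
next
  case (Suc r)
  then show ?case using paths_Suc[of "Suc r" b p] by simp
qed

lemma sum_paths_Suc:
  assumes s: "s \<ge> 1" and c: "c < p" and p2: "p \<ge> 2"
  shows "(\<Sum>P\<in>paths p 1 (V (Suc s) c). f P) = (\<Sum>b<p. \<Sum>Q\<in>paths p 1 (V s b). f (extp p s b c Q))"
proof -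
  obtain r where r: "s = Suc r" using s by (cases s) auto
  have fin: "\<forall>b\<in>{..<p}. finite (extp p s b c ` paths p 1 (V s b))"
    using finite_paths[OF p2] r by auto
  have disj: "\<forall>b\<in>{..<p}. \<forall>b'\<in>{..<p}. b \<noteq> b' \<longrightarrow>
      extp p s b c ` paths p 1 (V s b) \<inter> extp p s b' c ` paths p 1 (V s b') = {}"
    using extp_inj[of p s _ c] p2 by fastforce
  have inj: "inj_on (extp p s b c) (paths p 1 (V s b))" for b
    using extp_inj[of p s b c] p2 by (auto simp: inj_on_def)
  show ?thesis
    unfolding paths_Suc[OF s c]
    by (subst sum.UNION_disjoint[OF _ fin disj], simp, rule sum.cong, simp, subst sum.reindex[OF inj], simp)
qed

lemma sum_paths_one:
  assumes b: "b < p" and p2: "p \<ge> 2"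
  shows "(\<Sum>P\<in>paths p 1 (V 1 b). f P) = (\<Sum>t\<le>p-2. f ([S (p*t+b), V 1 b], [(p*t, p*(p-2-t))]))"
proof -
  have inj: "inj_on (\<lambda>t. ([S (p*t+b), V 1 b], [(p*t, p*(p-2-t))])) {..p-2}"
    using p2 by (auto simp: inj_on_def)
  show ?thesis unfolding paths_one[OF b p2] by (subst sum.reindex[OF inj]) simp
qed

lemma card_paths:
  assumes p2: "p \<ge> 2" shows "b < p \<Longrightarrow> card (paths p 1 (V (Suc r) b)) = (p-1)*p^r"
proof (induction r arbitrary: b)
  case 0
  have "card (paths p 1 (V (Suc 0) b)) = (\<Sum>P\<in>paths p 1 (V 1 b). 1)" by simp
  also have "\<dots> = (\<Sum>t\<le>p-2. 1)" by (rule sum_paths_one[OF 0 p2])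
  also have "\<dots> = p - 1" using p2 by simp
  finally show ?case by simp
next
  case (Suc r)
  have "card (paths p 1 (V (Suc (Suc r)) b)) = (\<Sum>P\<in>paths p 1 (V (Suc (Suc r)) b). 1)" by simp
  also have "\<dots> = (\<Sum>a<p. \<Sum>Q\<in>paths p 1 (V (Suc r) a). 1)"
    by (rule sum_paths_Suc) (use Suc.prems p2 in auto)
  also have "\<dots> = (\<Sum>a<p. (p-1)*p^r)" using Suc.IH by simp
  also have "\<dots> = (p-1)*p^Suc r" by simp
  finally show ?case .
qed



definition Acnt :: "nat \<Rightarrow> nat \<Rightarrow> nat" where
  "Acnt p c = (\<Sum>b<p. if dsc (B1 p b c) (B2 p b) then 1 else 0)"
definition Gcnt :: "nat \<Rightarrow> nat \<Rightarrow> nat" where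
  "Gcnt p c = (\<Sum>b<p. \<Sum>a<p. if dsc (B2 p a) (B1 p b c) then 1 else 0)"

lemma fib_step:
  assumes s: "s \<ge> 1" and c: "c < p" and p2: "p \<ge> 2"
  shows "fibM p 1 (V (Suc s) c) = (\<Sum>b<p. \<Sum>Q\<in>paths p 1 (V s b). des p 1 (snd Q)
     + (if 2 \<le> length (snd Q) \<and> dsc (last (snd Q)) (B1 p b c) then 1 else 0)
     + (if dsc (B1 p b c) (B2 p b) then 1 else 0))"
  unfolding fibM_def sum_paths_Suc[OF s c p2]
  by (intro sum.cong refl) (simp add: extp_def des_snoc2[OF paths_bs_ne])

lemma fib1:
  assumes b: "b < p" and ph: "p = 2*h+1" and h: "h \<ge> 1"
  shows "fibM p 1 (V 1 b) = h"
proof -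
  have p2: "p \<ge> 2" using ph h by simp
  have "fibM p 1 (V 1 b) = (\<Sum>t\<le>p-2. des p 1 [(p*t, p*(p-2-t))])"
    unfolding fibM_def by (subst sum_paths_one[OF b p2]) simp
  also have "\<dots> = (\<Sum>t\<le>p-2. if t < h then 1 else 0)"
  proof (intro sum.cong refl)
    fix t
    have "real t < (real p - 1)/2 \<longleftrightarrow> t < h" using ph by auto
    then show "des p 1 [(p*t, p*(p-2-t))] = (if t < h then 1 else 0)"
      using des_one[of p t] p2 by simp
  qed
  also have "\<dots> = card ({..p-2} \<inter> {t. t < h})" by (simp add: sum.If_cases)
  also have "{..p-2} \<inter> {t. t < h} = {..<h}" using ph h by auto
  finally show ?thesis by simp
qed

lemma len_one: "b < p \<Longrightarrow> p \<ge> 2 \<Longrightarrow> Q \<in> paths p 1 (V 1 b) \<Longrightarrow> length (snd Q) = 1"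
  using paths_one[of b p] by auto

lemma fib2:
  assumes c: "c < p" and p2: "p \<ge> 2"
  shows "fibM p 1 (V 2 c) = (\<Sum>b<p. fibM p 1 (V 1 b)) + (p-1) * Acnt p c"
proof -
  have "fibM p 1 (V 2 c) = (\<Sum>b<p. \<Sum>Q\<in>paths p 1 (V 1 b). des p 1 (snd Q)
     + (if 2 \<le> length (snd Q) \<and> dsc (last (snd Q)) (B1 p b c) then 1 else 0)
     + (if dsc (B1 p b c) (B2 p b) then 1 else 0))"
    using fib_step[OF _ c p2, of 1] by (simp add: numeral_2_eq_2)
  also have "\<dots> = (\<Sum>b<p. fibM p 1 (V 1 b) + (p-1) * (if dsc (B1 p b c) (B2 p b) then 1 else 0))"
  proof (intro sum.cong refl)
    fix b assume b: "b \<in> {..<p}"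
    have "(\<Sum>Q\<in>paths p 1 (V 1 b). des p 1 (snd Q)
     + (if 2 \<le> length (snd Q) \<and> dsc (last (snd Q)) (B1 p b c) then 1 else 0)
     + (if dsc (B1 p b c) (B2 p b) then 1 else 0))
      = (\<Sum>Q\<in>paths p 1 (V 1 b). des p 1 (snd Q) + (if dsc (B1 p b c) (B2 p b) then 1 else 0))"
      using len_one[of b p] b p2 by (intro sum.cong refl) auto
    also have "\<dots> = fibM p 1 (V 1 b) + card (paths p 1 (V 1 b)) * (if dsc (B1 p b c) (B2 p b) then 1 else 0)"
      by (simp add: sum.distrib fibM_def)
    also have "card (paths p 1 (V 1 b)) = p - 1" using card_paths[OF p2, of b 0] b by simp
    finally show "(\<Sum>Q\<in>paths p 1 (V 1 b). des p 1 (snd Q)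
     + (if 2 \<le> length (snd Q) \<and> dsc (last (snd Q)) (B1 p b c) then 1 else 0)
     + (if dsc (B1 p b c) (B2 p b) then 1 else 0)) = fibM p 1 (V 1 b) + (p-1) * (if dsc (B1 p b c) (B2 p b) then 1 else 0)" .
  qed
  also have "\<dots> = (\<Sum>b<p. fibM p 1 (V 1 b)) + (p-1) * Acnt p c"
    by (simp add: sum.distrib Acnt_def sum_distrib_left)
  finally show ?thesis .
qed

lemma fibSS:
  assumes r: "r \<ge> 1" and c: "c < p" and p2: "p \<ge> 2"
  shows "fibM p 1 (V (Suc (Suc r)) c) = (\<Sum>b<p. fibM p 1 (V (Suc r) b))
     + (p-1)*p^(r-1) * Gcnt p c + (p-1)*p^r * Acnt p c"
proof -
  obtain r' where r': "r = Suc r'" using r by (cases r) auto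
  have mid: "(\<Sum>Q\<in>paths p 1 (V (Suc r) b).
       (if 2 \<le> length (snd Q) \<and> dsc (last (snd Q)) (B1 p b c) then 1 else 0))
     = (p-1)*p^(r-1) * (\<Sum>a<p. if dsc (B2 p a) (B1 p b c) then 1 else 0)" if b: "b < p" for b
  proof -
    have "(\<Sum>Q\<in>paths p 1 (V (Suc r) b).
       (if 2 \<le> length (snd Q) \<and> dsc (last (snd Q)) (B1 p b c) then 1 else 0))
      = (\<Sum>a<p. \<Sum>R\<in>paths p 1 (V r a). (if 2 \<le> length (snd (extp p r a b R)) \<and> dsc (last (snd (extp p r a b R))) (B1 p b c) then 1 else 0))"
      by (rule sum_paths_Suc) (use r b p2 in auto)
    also have "\<dots> = (\<Sum>a<p. \<Sum>R\<in>paths p 1 (V r a). (if dsc (B2 p a) (B1 p b c) then 1 else 0))"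
      by (intro sum.cong refl) (simp add: extp_def)
    also have "\<dots> = (\<Sum>a<p. (p-1)*p^(r-1) * (if dsc (B2 p a) (B1 p b c) then 1 else 0))"
      using card_paths[OF p2] r' by (intro sum.cong refl) simp
    finally show ?thesis by (simp add: sum_distrib_left)
  qed
  have "fibM p 1 (V (Suc (Suc r)) c) = (\<Sum>b<p. \<Sum>Q\<in>paths p 1 (V (Suc r) b). des p 1 (snd Q)
     + (if 2 \<le> length (snd Q) \<and> dsc (last (snd Q)) (B1 p b c) then 1 else 0)
     + (if dsc (B1 p b c) (B2 p b) then 1 else 0))"
    using fib_step[OF _ c p2, of "Suc r"] by simp
  also have "\<dots> = (\<Sum>b<p. fibM p 1 (V (Suc r) b)
      + (p-1)*p^(r-1) * (\<Sum>a<p. if dsc (B2 p a) (B1 p b c) then 1 else 0)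
      + (p-1)*p^r * (if dsc (B1 p b c) (B2 p b) then 1 else 0))"
  proof (intro sum.cong refl)
    fix b assume b: "b \<in> {..<p}"
    have "(\<Sum>Q\<in>paths p 1 (V (Suc r) b). des p 1 (snd Q)
     + (if 2 \<le> length (snd Q) \<and> dsc (last (snd Q)) (B1 p b c) then 1 else 0)
     + (if dsc (B1 p b c) (B2 p b) then 1 else 0))
      = fibM p 1 (V (Suc r) b) + (\<Sum>Q\<in>paths p 1 (V (Suc r) b).
       (if 2 \<le> length (snd Q) \<and> dsc (last (snd Q)) (B1 p b c) then 1 else 0))
       + card (paths p 1 (V (Suc r) b)) * (if dsc (B1 p b c) (B2 p b) then 1 else 0)"
      by (simp add: sum.distrib fibM_def)
    then show "(\<Sum>Q\<in>paths p 1 (V (Suc r) b). des p 1 (snd Q)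
     + (if 2 \<le> length (snd Q) \<and> dsc (last (snd Q)) (B1 p b c) then 1 else 0)
     + (if dsc (B1 p b c) (B2 p b) then 1 else 0)) = fibM p 1 (V (Suc r) b)
      + (p-1)*p^(r-1) * (\<Sum>a<p. if dsc (B2 p a) (B1 p b c) then 1 else 0)
      + (p-1)*p^r * (if dsc (B1 p b c) (B2 p b) then 1 else 0)"
      using mid[of b] b card_paths[OF p2, of b r] by simp
  qed
  also have "\<dots> = (\<Sum>b<p. fibM p 1 (V (Suc r) b))
     + (p-1)*p^(r-1) * Gcnt p c + (p-1)*p^r * Acnt p c"
    by (simp add: sum.distrib Acnt_def Gcnt_def sum_distrib_left)
  finally show ?thesis .
qed



lemma condA:
  fixes b c h :: nat
  assumes b: "b \<le> 2*h" and c: "c \<le> 2*h"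
  shows "((2*h+1)*b < (2*h+1)*(2*h) - (2*h*b+c) \<and> 2*h*b+c < (2*h+1)*(2*h-b)) \<longleftrightarrow> (b < h \<or> (b = h \<and> c < h))"
proof -
  have e1: "(2*h+1)*(2*h-b) = (2*h+1)*(2*h) - (2*h+1)*b" by (simp add: diff_mult_distrib2)
  have le1: "2*h*b \<le> 2*h*(2*h)" using b by (rule mult_le_mono2)
  have le2: "(2*h+1)*b \<le> (2*h+1)*(2*h)" using b by (rule mult_le_mono2)
  consider "b < h" | "b = h" | "b > h" by linarith
  then show ?thesis
  proof cases
    case 1
    then have "h*(b+1) \<le> h*h" by (intro mult_le_mono2) simp
    then show ?thesis using 1 e1 le1 le2 c by (simp add: algebra_simps) linarith
  next
    case 2
    then show ?thesis using e1 le1 le2 c by (simp add: algebra_simps) linarith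
  next
    case 3
    then have "h*(h+1) \<le> h*b" by (intro mult_le_mono2) simp
    then show ?thesis using 3 e1 le1 le2 c by (simp add: algebra_simps)
  qed
qed



lemma condG:
  fixes a b c h :: nat
  assumes a: "a \<le> 2*h" and b: "b \<le> 2*h" and c: "c \<le> 2*h"
  shows "((2*h+1)*(2*h) - (2*h*b+c) < (2*h+1)*a \<and> (2*h+1)*(2*h-a) < 2*h*b+c)
     \<longleftrightarrow> (a+b \<ge> 2*h+1 \<or> (a+b = 2*h \<and> a+c \<ge> 2*h+1))"
proof -
  have e1: "(2*h+1)*(2*h-a) = (2*h+1)*(2*h) - (2*h+1)*a" by (simp add: diff_mult_distrib2)
  have le1: "2*h*b \<le> 2*h*(2*h)" using b by (rule mult_le_mono2)
  have le2: "(2*h+1)*a \<le> (2*h+1)*(2*h)" using a by (rule mult_le_mono2)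
  consider "a+b \<ge> 2*h+1" | "a+b = 2*h" | "a+b+1 \<le> 2*h" by linarith
  then show ?thesis
  proof cases
    case 1
    then have "(2*h+1)*(2*h+1) \<le> (2*h+1)*(a+b)" by (rule mult_le_mono2)
    then show ?thesis using 1 e1 le1 le2 a b c by (simp add: algebra_simps, (linarith)?)
  next
    case 2
    then have m: "a*h + b*h = 2*h*h" by (metis add_mult_distrib mult.commute)
    show ?thesis using 2 m e1 le1 le2 a b c by (simp add: algebra_simps) (auto; linarith)
  next
    case 3
    then have "(2*h+1)*(a+b+1) \<le> (2*h+1)*(2*h)" by (rule mult_le_mono2)
    then show ?thesis using 3 e1 le1 le2 a b c by (simp add: algebra_simps, (linarith)?)
  qed
qed



lemma dscA:
  assumes "b \<le> 2*h" "c \<le> 2*h"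
  shows "dsc (B1 (2*h+1) b c) (B2 (2*h+1) b) \<longleftrightarrow> (b < h \<or> (b = h \<and> c < h))"
  using condA[OF assms] by (simp add: dsc_def B1_def B2_def)

lemma dscG:
  assumes "a \<le> 2*h" "b \<le> 2*h" "c \<le> 2*h"
  shows "dsc (B2 (2*h+1) a) (B1 (2*h+1) b c) \<longleftrightarrow> (a+b \<ge> 2*h+1 \<or> (a+b = 2*h \<and> a+c \<ge> 2*h+1))"
  using condG[OF assms] by (simp add: dsc_def B1_def B2_def)

lemma double_sum_id: "2 * (\<Sum>a<n. a) = n * (n - 1)" for n :: nat
proof (induction n)
  case 0 then show ?case by simp
next
  case (Suc n) then show ?case by (cases n) (simp_all add: algebra_simps)
qed

lemma card_top: "m \<le> n \<Longrightarrow> card ({..<n} \<inter> {b. n \<le> m' + b}) = min m' n" for m m' n :: nat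
proof -
  have "{..<n} \<inter> {b. n \<le> m' + b} = {n - m'..<n}" by auto
  then show ?thesis by simp
qed

lemma sum_ind: "finite A \<Longrightarrow> (\<Sum>x\<in>A. if P x then (1::nat) else 0) = card (A \<inter> {x. P x})"
  by (simp add: sum.If_cases)

lemma sum_delta': "(\<Sum>b<n. if b = m then (x::nat) else 0) = (if m < n then x else 0)" for n :: nat
proof -
  have "(\<Sum>b<n. if b = m then (x::nat) else 0) = (if m \<in> {..<n} then x else 0)"
    by (rule sum.delta) simp_all
  then show ?thesis by simp
qed

lemma Acnt_val:
  assumes c: "c \<le> 2*h"
  shows "Acnt (2*h+1) c = h + (if c < h then 1 else 0)"
proof -
  have "Acnt (2*h+1) c = (\<Sum>b<2*h+1. (if b < h then 1 else 0) + (if b = h then (if c < h then 1 else 0) else 0))"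
    unfolding Acnt_def using dscA[OF _ c] by (intro sum.cong refl) auto
  also have "\<dots> = card ({..<2*h+1} \<inter> {b. b < h}) + (if c < h then 1 else 0)"
    by (simp only: sum.distrib sum_ind[OF finite_lessThan] sum_delta') simp
  also have "{..<2*h+1} \<inter> {b. b < h} = {..<h}" by auto
  finally show ?thesis by simp
qed

lemma Gcnt_val:
  assumes c: "c \<le> 2*h"
  shows "Gcnt (2*h+1) c = (2*h+1)*h + c"
proof -
  have "Gcnt (2*h+1) c = (\<Sum>a<2*h+1. \<Sum>b<2*h+1. if dsc (B2 (2*h+1) a) (B1 (2*h+1) b c) then 1 else 0)"
    unfolding Gcnt_def by (rule sum.swap)
  also have "\<dots> = (\<Sum>a<2*h+1. a + (if a + c \<ge> 2*h+1 then 1 else 0))"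
  proof (intro sum.cong refl)
    fix a assume a: "a \<in> {..<2*h+1}"
    have "(\<Sum>b<2*h+1. if dsc (B2 (2*h+1) a) (B1 (2*h+1) b c) then 1 else 0)
       = (\<Sum>b<2*h+1. (if 2*h+1 \<le> a + b then 1 else 0)
            + (if b = 2*h - a then (if a + c \<ge> 2*h+1 then 1 else 0) else 0))"
      using dscG[of a h _ c] a c by (intro sum.cong refl) auto
    also have "\<dots> = card ({..<2*h+1} \<inter> {b. 2*h+1 \<le> a + b}) + (if a + c \<ge> 2*h+1 then 1 else 0)"
      using a by (simp only: sum.distrib sum_ind[OF finite_lessThan] sum_delta') auto
    also have "card ({..<2*h+1} \<inter> {b. 2*h+1 \<le> a + b}) = a"
      using card_top[of a "2*h+1" a] a by simp
    finally show "(\<Sum>b<2*h+1. if dsc (B2 (2*h+1) a) (B1 (2*h+1) b c) then 1 else 0)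
       = a + (if a + c \<ge> 2*h+1 then 1 else 0)" .
  qed
  also have "\<dots> = (\<Sum>a<2*h+1. a) + card ({..<2*h+1} \<inter> {a. 2*h+1 \<le> c + a})"
    by (simp only: sum.distrib sum_ind[OF finite_lessThan] add.commute)
  also have "card ({..<2*h+1} \<inter> {a. 2*h+1 \<le> c + a}) = c"
    using card_top[of c "2*h+1" c] c by simp
  also have "(\<Sum>a<2*h+1. a) = (2*h+1)*h"
    using double_sum_id[of "2*h+1"] by simp
  finally show ?thesis .
qed



lemma sumA: "(\<Sum>c<2*h+1. h + (if c < h then 1 else 0)) = (2*h+1)*h + (h::nat)"
proof -
  have "(\<Sum>c<2*h+1. h + (if c < h then 1 else 0)) = (2*h+1)*h + card ({..<2*h+1} \<inter> {c. c < h})"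
    by (simp only: sum.distrib sum_ind[OF finite_lessThan]) simp
  also have "{..<2*h+1} \<inter> {c. c < h} = {..<h}" by auto
  finally show ?thesis by simp
qed

lemma sumG: "(\<Sum>c<2*h+1. (2*h+1)*h + c) = (2*h+1)*((2*h+1)*h) + (2*h+1)*(h::nat)"
proof -
  have "(\<Sum>c<2*h+1. c) = (2*h+1)*h" using double_sum_id[of "2*h+1"] by simp
  then show ?thesis by (simp add: sum.distrib del: sum.lessThan_Suc)
qed

definition UU :: "nat \<Rightarrow> nat \<Rightarrow> nat" where
  "UU h r = 8*h*h + 8*h + 1 + r*(8*h*h + 8*h)"

lemma main_nat:
  assumes ph: "p = 2*h+1" and h: "h \<ge> 1"
  shows "(\<Sum>b<p. fibM p 1 (V (Suc (Suc r)) b)) = p^r * h * UU h r"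
    and "c < p \<Longrightarrow> fibM p 1 (V (Suc (Suc (Suc r))) c)
          = p^r * h * (UU h r + 2*(2*h+1)*h + 2*c) + 2*h*p^(r+1)*(h + (if c < h then 1 else 0))"
proof -
  have p2: "p \<ge> 2" using ph h by simp
  have pm1: "p - 1 = 2*h" using ph by simp
  have T1: "(\<Sum>b<p. fibM p 1 (V 1 b)) = p*h" using fib1[OF _ ph h] by simp
  have D3: "fibM p 1 (V (Suc (Suc (Suc r))) c) = (\<Sum>b<p. fibM p 1 (V (Suc (Suc r)) b))
       + 2*h*p^r * ((2*h+1)*h + c) + 2*h*p^(r+1) * (h + (if c < h then 1 else 0))"
    if c: "c < p" for r c
  proof -
    have "c \<le> 2*h" using c ph by simp
    then show ?thesis using fibSS[of "Suc r" c p] c p2 pm1 Acnt_val Gcnt_val ph by simp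
  qed
  have T: "(\<Sum>b<p. fibM p 1 (V (Suc (Suc r)) b)) = p^r * h * UU h r" for r
  proof (induction r)
    case 0
    have "(\<Sum>c<p. fibM p 1 (V 2 c)) = (\<Sum>c<p. p*h + 2*h*(h + (if c < h then 1 else 0)))"
    proof (intro sum.cong refl)
      fix c assume "c \<in> {..<p}"
      then have "c < p" "c \<le> 2*h" using ph by auto
      then show "fibM p 1 (V 2 c) = p*h + 2*h*(h + (if c < h then 1 else 0))"
        using fib2[of c p] p2 T1 pm1 Acnt_val ph by simp
    qed
    also have "\<dots> = p*(p*h) + 2*h*((2*h+1)*h + h)"
      using sumA[of h] ph by (simp add: sum.distrib sum_distrib_left[symmetric] del: sum.lessThan_Suc)
    also have "\<dots> = p^0 * h * UU h 0" using ph by (simp add: UU_def algebra_simps)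
    finally show ?case by (simp add: numeral_2_eq_2)
  next
    case (Suc r)
    have "(\<Sum>c<p. fibM p 1 (V (Suc (Suc (Suc r))) c)) = (\<Sum>c<p. p^r * h * UU h r
       + 2*h*p^r * ((2*h+1)*h + c) + 2*h*p^(r+1) * (h + (if c < h then 1 else 0)))"
      using D3 Suc.IH by simp
    also have "\<dots> = p*(p^r * h * UU h r) + 2*h*p^r * ((2*h+1)*((2*h+1)*h) + (2*h+1)*h)
        + 2*h*p^(r+1) * ((2*h+1)*h + h)"
      using sumA[of h] sumG[of h] ph
      by (simp add: sum.distrib sum_distrib_left[symmetric] del: sum.lessThan_Suc)
    also have "\<dots> = p^Suc r * h * UU h (Suc r)" using ph by (simp add: UU_def algebra_simps)
    finally show ?case .
  qed
  show "(\<Sum>b<p. fibM p 1 (V (Suc (Suc r)) b)) = p^r * h * UU h r" by (rule T)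
  show "c < p \<Longrightarrow> fibM p 1 (V (Suc (Suc (Suc r))) c)
          = p^r * h * (UU h r + 2*(2*h+1)*h + 2*c) + 2*h*p^(r+1)*(h + (if c < h then 1 else 0))"
    using D3 T by (simp add: algebra_simps)
qed



theorem mainTheorem6:
  fixes p s t :: nat
  assumes "prime p" and "odd p" and "s \<ge> 3" and "t \<le> p - 1"
  shows "real (fibM p 1 (V s t)) =
    (if real t < (real p - 1) / 2
     then real p ^ (s - 3) * (real p - 1) / 2 *
            (2 * (real s - 1) * real p ^ 2 + 2 * real t - (2 * real s - 5))
     else real p ^ (s - 3) * (real p - 1) / 2 *
            (2 * (real s - 1) * real p ^ 2 + 2 * real t - 2 * real p - (2 * real s - 5)))"
proof -
  obtain h where ph: "p = 2*h+1" using assms(2) oddE by blast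
  have "p \<ge> 2" using assms(1) prime_ge_2_nat by blast
  then have h: "h \<ge> 1" using ph by simp
  define r where "r = s - 3"
  have r: "s = Suc (Suc (Suc r))" using assms(3) unfolding r_def by simp
  have tp: "t < p" using assms(4) ph by simp
  have F: "fibM p 1 (V s t) = p^r * h * (UU h r + 2*(2*h+1)*h + 2*t) + 2*h*p^(r+1)*(h + (if t < h then 1 else 0))"
    using main_nat(2)[OF ph h tp] r by simp
  have cond: "real t < (real p - 1) / 2 \<longleftrightarrow> t < h" using ph by auto
  have rp: "real p = 2 * real h + 1" using ph by simp
  have sr: "s - 3 = r" "real s = real r + 3" using r by auto
  show ?thesis
  proof (cases "t < h")
    case True
    then show ?thesis unfolding F cond sr
      by (simp add: UU_def algebra_simps power2_eq_square rp)
  next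
    case False
    then show ?thesis unfolding F cond sr
      by (simp add: UU_def algebra_simps power2_eq_square rp)
  qed
qed


end
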